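(* Assume $V$ is an $(X^{\rm in},T,\varphi)$-compatible Opt-Lyapunov function for $(X^{\rm in},T)$ with $N'_T(V)>0$, and let $\alpha$ be an $(X^{\rm in},T,\varphi)$-certificate of compatibility for $V$, with $I$ the interval such that $\alpha(I)=[0,1]$ and $\alpha$ strictly increasing continuous on $\operatorname{conv}(I^\varphi\cup I)$. Let $J=\overline{\operatorname{conv}}(I^\varphi\cup I)$, $\overline V=\sup_{x\in X^{\rm in}}V(x)$, and $h(x)=(\alpha|_J)^{-1}(x\overline V)$ for $x\in[0,1]$ (extended arbitrarily to $\mathbb R$). Then $h$ is strictly increasing and continuous on $[0,1]$, $N'_T(V)\in(0,1)$, $\nu_k\le h\big((N'_T(V))^k\big)$ for all $k\in\mathbb N$, and $\{k\in\mathbb N:\nu_k>h(0)\}\neq\emptyset$.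
   Context: Standing data: nonempty $X^{\rm in}\subseteq\mathbb R^d$, $T:\mathbb R^d\to\mathbb R^d$, $\varphi:\mathbb R^d\to\mathbb R$ with $\varphi(0)=0$, $\nu_k=\sup_{x\in X^{\rm in}}\varphi(T^k(x))$ finite for all $k$; $G^{>}_\nu=\{k:\nu_k>\limsup_n\nu_n\}$. An Opt-Lyapunov function for $(X^{\rm in},T)$ is $V:\mathbb R^d\to[0,+\infty]$ with $\sup_{X^{\rm in}}V\in(0,1]$ and $V\circ T\le\lambda V$ for some $\lambda\in(0,1)$. $N'_T(V)=\sup\{V(T(x))/V(x):V(x)\in(0,+\infty)\}$. $I^\varphi=\overline{\operatorname{conv}}\{\varphi(T^k(x)):k\in\mathbb N,x\in X^{\rm in}\}$. $\mathrm{SC}$: functions $\alpha:\mathbb R\to\mathbb R$ with an interval $I$ such that $\alpha(I)=[0,1]$ and $\alpha$ strictly increasing continuous on $\operatorname{conv}(I^\varphi\cup I)$ (such $I$ is unique). A certificate of compatibility for $g$ is $\alpha\in\mathrm{SC}$ with $\alpha(\nu_k)>0$ for some $k\in G^{>}_\nu$ and $\alpha(\varphi(T^k(x)))\le g(T^k(x))$ for all $k,x\in X^{\rm in}$. $g$ is $(X^{\rm in},T,\varphi)$-compatible if for some $k\in G^{>}_\nu$ there are $\varepsilon,\eta>0$ with: $x\in X^{\rm in}$, $j\in\mathbb N$, $\varphi(T^j(x))>\nu_k-\eta$ imply $g(T^j(x))>\varepsilon$. *)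

theory Defs
  imports "HOL-Analysis.Analysis" "HOL-Library.Liminf_Limsup"
begin

text \<open>Ambient space R^d is modelled by a Euclidean space type 'a.
  Functions V : R^d -> [0,+inf] are modelled as 'a => ereal with V >= 0.\<close>

definition nu :: "'a set \<Rightarrow> ('a \<Rightarrow> 'a) \<Rightarrow> ('a \<Rightarrow> real) \<Rightarrow> nat \<Rightarrow> real" where
  "nu X T \<phi> k = (SUP x\<in>X. \<phi> ((T ^^ k) x))"

definition Gsup :: "'a set \<Rightarrow> ('a \<Rightarrow> 'a) \<Rightarrow> ('a \<Rightarrow> real) \<Rightarrow> nat set" where
  "Gsup X T \<phi> = {k. ereal (nu X T \<phi> k) > limsup (\<lambda>n. ereal (nu X T \<phi> n))}"

definition Iphi :: "'a set \<Rightarrow> ('a \<Rightarrow> 'a) \<Rightarrow> ('a \<Rightarrow> real) \<Rightarrow> real set" where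
  "Iphi X T \<phi> = closure (convex hull {\<phi> ((T ^^ k) x) | k x. x \<in> X})"

definition opt_lyapunov :: "'a set \<Rightarrow> ('a \<Rightarrow> 'a) \<Rightarrow> ('a \<Rightarrow> ereal) \<Rightarrow> bool" where
  "opt_lyapunov X T V \<longleftrightarrow> (\<forall>x. 0 \<le> V x) \<and>
     (SUP x\<in>X. V x) \<in> {0<..1} \<and>
     (\<exists>lam::real. 0 < lam \<and> lam < 1 \<and> (\<forall>x. V (T x) \<le> ereal lam * V x))"

definition Nprime :: "('a \<Rightarrow> 'a) \<Rightarrow> ('a \<Rightarrow> ereal) \<Rightarrow> ereal" where
  "Nprime T V = Sup {V (T x) / V x | x. 0 < V x \<and> V x < \<infinity>}"

definition SC_with :: "'a set \<Rightarrow> ('a \<Rightarrow> 'a) \<Rightarrow> ('a \<Rightarrow> real) \<Rightarrow> (real \<Rightarrow> real) \<Rightarrow> real set \<Rightarrow> bool" where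
  "SC_with X T \<phi> \<alpha> I \<longleftrightarrow> is_interval I \<and> \<alpha> ` I = {0..1} \<and>
     strict_mono_on (convex hull (Iphi X T \<phi> \<union> I)) \<alpha> \<and>
     continuous_on (convex hull (Iphi X T \<phi> \<union> I)) \<alpha>"

definition SC :: "'a set \<Rightarrow> ('a \<Rightarrow> 'a) \<Rightarrow> ('a \<Rightarrow> real) \<Rightarrow> (real \<Rightarrow> real) \<Rightarrow> bool" where
  "SC X T \<phi> \<alpha> \<longleftrightarrow> (\<exists>I. SC_with X T \<phi> \<alpha> I)"

definition certificate :: "'a set \<Rightarrow> ('a \<Rightarrow> 'a) \<Rightarrow> ('a \<Rightarrow> real) \<Rightarrow> ('a \<Rightarrow> ereal) \<Rightarrow> (real \<Rightarrow> real) \<Rightarrow> bool" where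
  "certificate X T \<phi> g \<alpha> \<longleftrightarrow> SC X T \<phi> \<alpha> \<and>
     (\<exists>k\<in>Gsup X T \<phi>. \<alpha> (nu X T \<phi> k) > 0) \<and>
     (\<forall>k. \<forall>x\<in>X. ereal (\<alpha> (\<phi> ((T ^^ k) x))) \<le> g ((T ^^ k) x))"

definition compatible :: "'a set \<Rightarrow> ('a \<Rightarrow> 'a) \<Rightarrow> ('a \<Rightarrow> real) \<Rightarrow> ('a \<Rightarrow> ereal) \<Rightarrow> bool" where
  "compatible X T \<phi> g \<longleftrightarrow> (\<exists>k\<in>Gsup X T \<phi>. \<exists>\<epsilon>>0. \<exists>\<eta>>0.
     \<forall>x\<in>X. \<forall>j. \<phi> ((T ^^ j) x) > nu X T \<phi> k - \<eta> \<longrightarrow> g ((T ^^ j) x) > ereal \<epsilon>)"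

end

theory Submission
  imports Defs
begin

lemma hull_union_closed_real:
  fixes U :: "real set"
  assumes cU: "closed U" and ne: "U \<noteq> {}"
  shows "closed (convex hull U)"
proof -
  let ?H = "convex hull U"
  have cvx: "convex ?H" by (rule convex_convex_hull)
  have sub: "U \<subseteq> ?H" by (rule hull_subset)
  have lo: "\<exists>p\<in>U. p \<le> z" if z: "z \<in> closure ?H" for z
  proof (rule ccontr)
    assume "\<not> (\<exists>p\<in>U. p \<le> z)"
    hence gt: "\<forall>p\<in>U. z < p" by auto
    have bb: "bdd_below U" using gt unfolding bdd_below_def by (meson less_imp_le)
    have inU: "Inf U \<in> U" by (rule closed_contains_Inf[OF ne bb cU])
    have "?H \<subseteq> {Inf U..}"
      by (rule hull_minimal) (auto intro: cInf_lower[OF _ bb] simp: convex_real_interval)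
    hence "closure ?H \<subseteq> {Inf U..}" by (rule closure_minimal) simp
    with z have "Inf U \<le> z" by auto
    with gt inU show False by force
  qed
  have hi: "\<exists>q\<in>U. z \<le> q" if z: "z \<in> closure ?H" for z
  proof (rule ccontr)
    assume "\<not> (\<exists>q\<in>U. z \<le> q)"
    hence gt: "\<forall>p\<in>U. p < z" by auto
    have bb: "bdd_above U" using gt unfolding bdd_above_def by (meson less_imp_le)
    have inU: "Sup U \<in> U" by (rule closed_contains_Sup[OF ne bb cU])
    have "?H \<subseteq> {..Sup U}"
      by (rule hull_minimal) (auto intro: cSup_upper[OF _ bb] simp: convex_real_interval)
    hence "closure ?H \<subseteq> {..Sup U}" by (rule closure_minimal) simp
    with z have "z \<le> Sup U" by auto
    with gt inU show False by force
  qed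
  have "closure ?H \<subseteq> ?H"
  proof
    fix z assume z: "z \<in> closure ?H"
    obtain p where p: "p \<in> U" "p \<le> z" using lo[OF z] by blast
    obtain q where q: "q \<in> U" "z \<le> q" using hi[OF z] by blast
    have "is_interval ?H" using cvx by (simp add: is_interval_convex_1)
    thus "z \<in> ?H" using p q sub by (meson mem_is_interval_1_I subsetD)
  qed
  thus ?thesis using closure_subset_eq by blast
qed

theorem mainTheorem18:
  fixes X :: "'a::euclidean_space set" and T :: "'a \<Rightarrow> 'a" and \<phi> :: "'a \<Rightarrow> real"
    and V :: "'a \<Rightarrow> ereal" and \<alpha> :: "real \<Rightarrow> real" and I :: "real set"
    and h :: "real \<Rightarrow> real"
  assumes X_ne: "X \<noteq> {}"
    and phi0: "\<phi> 0 = 0"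
    and nu_fin: "\<And>k. bdd_above ((\<lambda>x. \<phi> ((T ^^ k) x)) ` X)"
    and lyap: "opt_lyapunov X T V"
    and compat: "compatible X T \<phi> V"
    and Npos: "Nprime T V > 0"
    and cert: "certificate X T \<phi> V \<alpha>"
    and I: "SC_with X T \<phi> \<alpha> I"
    and h_def: "\<And>y. y \<in> {0..1} \<Longrightarrow>
        h y = the_inv_into (closure (convex hull (Iphi X T \<phi> \<union> I))) \<alpha>
                (y * real_of_ereal (SUP x\<in>X. V x))"
  shows "strict_mono_on {0..1} h \<and> continuous_on {0..1} h
    \<and> 0 < Nprime T V \<and> Nprime T V < 1
    \<and> (\<forall>k. nu X T \<phi> k \<le> h (real_of_ereal (Nprime T V) ^ k))
    \<and> {k. nu X T \<phi> k > h 0} \<noteq> {}"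
proof -
  define P where "P = Iphi X T \<phi>"
  define J0 where "J0 = convex hull (P \<union> I)"
  have Iint: "is_interval I" and aI: "\<alpha> ` I = {0..1}" and sm: "strict_mono_on J0 \<alpha>"
    and ct: "continuous_on J0 \<alpha>"
    using I unfolding SC_with_def P_def J0_def by auto
  have IJ: "I \<subseteq> J0" "P \<subseteq> J0" unfolding J0_def by (auto intro: hull_subset[THEN subsetD])
  have inj: "inj_on \<alpha> J0" using sm by (rule strict_mono_on_imp_inj_on)
  have ord: "s < t" if "s \<in> J0" "t \<in> J0" "\<alpha> s < \<alpha> t" for s t
    using that sm by (meson not_less strict_mono_on_leD)
  have ord2: "s \<le> t" if "s \<in> J0" "t \<in> J0" "\<alpha> s \<le> \<alpha> t" for s t
    using that sm by (meson not_less strict_mono_onD)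
  obtain a where a: "a \<in> I" "\<alpha> a = 0" using aI by (metis atLeastAtMost_iff imageE order_refl zero_le_one)
  obtain b where b: "b \<in> I" "\<alpha> b = 1" using aI by (metis atLeastAtMost_iff imageE order_refl zero_le_one)
  have Ieq: "I = {a..b}"
  proof
    show "I \<subseteq> {a..b}"
    proof
      fix x assume x: "x \<in> I"
      hence "\<alpha> x \<in> {0..1}" using aI by blast
      hence "a \<le> x" "x \<le> b" using ord2[of a x] ord2[of x b] x a b IJ by auto
      thus "x \<in> {a..b}" by simp
    qed
    show "{a..b} \<subseteq> I"
    proof
      fix x assume "x \<in> {a..b}"
      thus "x \<in> I" using mem_is_interval_1_I[OF Iint a(1) b(1)] by simp
    qed
  qed
  have Pcl: "closed P" unfolding P_def Iphi_def by simp
  have J0cl: "closed J0" unfolding J0_def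
    by (rule hull_union_closed_real) (use Pcl Ieq a in auto)
  have Jeq: "closure J0 = J0" using J0cl by simp
  have hd: "h y = the_inv_into J0 \<alpha> (y * real_of_ereal (SUP x\<in>X. V x))" if "y \<in> {0..1}" for y
    using h_def[OF that] Jeq unfolding J0_def P_def by simp
  obtain lam where lam: "0 < lam" "lam < 1" "\<And>x. V (T x) \<le> ereal lam * V x"
    and Vnn: "\<And>x. 0 \<le> V x" and Vb: "(SUP x\<in>X. V x) \<in> {0<..1}"
    using lyap unfolding opt_lyapunov_def by blast
  define vb where "vb = real_of_ereal (SUP x\<in>X. V x)"
  have vbe: "(SUP x\<in>X. V x) = ereal vb" and vb: "0 < vb" "vb \<le> 1"
    using Vb unfolding vb_def by (cases "SUP x\<in>X. V x"; auto)+
  have key: "h y \<in> I \<and> \<alpha> (h y) = y * vb" if y: "y \<in> {0..1}" for y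
  proof -
    have "y * vb \<in> {0..1}" using y vb by (auto simp: mult_le_one)
    then obtain t where t: "t \<in> I" "\<alpha> t = y * vb" using aI by (metis imageE)
    have "the_inv_into J0 \<alpha> (\<alpha> t) = t" using the_inv_into_f_f[OF inj, of t] IJ t by blast
    thus ?thesis using hd[OF y] t unfolding vb_def by simp
  qed
  have hsm: "strict_mono_on {0..1} h"
  proof (rule strict_mono_onI)
    fix r s :: real assume r: "r \<in> {0..1}" and s: "s \<in> {0..1}" and rs: "r < s"
    have "\<alpha> (h r) < \<alpha> (h s)" using key[OF r] key[OF s] rs vb by simp
    thus "h r < h s" using ord key[OF r] key[OF s] IJ by blast
  qed
  have hct: "continuous_on {0..1} h"
  proof -
    have c1: "continuous_on {0..1} (the_inv_into I \<alpha>)"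
      using continuous_on_inv_into[of I \<alpha>] ct IJ inj aI Ieq
      by (metis compact_Icc continuous_on_subset inj_on_subset)
    have c2: "continuous_on {0..1} (\<lambda>y. the_inv_into I \<alpha> (y * vb))"
      by (rule continuous_on_compose2[OF c1]) (use vb in \<open>auto intro!: continuous_intros simp: mult_le_one\<close>)
    have eq: "h y = the_inv_into I \<alpha> (y * vb)" if y: "y \<in> {0..1}" for y
      using key[OF y] inj IJ by (metis inj_on_subset the_inv_into_f_f)
    show ?thesis by (rule continuous_on_eq[OF c2]) (simp add: eq)
  qed
  define R where "R = {V (T x) / V x | x. 0 < V x \<and> V x < \<infinity>}"
  have Ndef: "Nprime T V = Sup R" unfolding Nprime_def R_def by simp
  have Rle: "r \<le> ereal lam" if rR: "r \<in> R" for r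
  proof -
    obtain x where x: "r = V (T x) / V x" "0 < V x" "V x < \<infinity>" using rR R_def by blast
    obtain v where v: "V x = ereal v" "0 < v" using x by (cases "V x") auto
    have l: "V (T x) \<le> ereal (lam * v)" using lam(3)[of x] v by simp
    obtain w where w: "V (T x) = ereal w" using l Vnn[of "T x"] by (cases "V (T x)") auto
    have "w \<le> lam * v" using l w by simp
    hence "w / v \<le> lam" using v by (simp add: divide_le_eq)
    thus ?thesis using x v w by simp
  qed
  have Nle: "Nprime T V \<le> ereal lam" unfolding Ndef by (rule Sup_least) (rule Rle)
  have N1: "Nprime T V < 1" using Nle lam by (metis ereal_less(3) order_le_less_trans one_ereal_def)
  define n where "n = real_of_ereal (Nprime T V)"
  have ne: "Nprime T V = ereal n" and n: "0 < n" "n < 1"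
    using Npos N1 unfolding n_def by (cases "Nprime T V"; auto)+
  have step: "V (T x) \<le> ereal (n * v)" if hv: "V x = ereal v" for x v
  proof (cases "v = 0")
    case True
    thus ?thesis using lam(3)[of x] that by simp
  next
    case False
    hence v: "0 < v" using Vnn[of x] that by simp
    obtain w where w: "V (T x) = ereal w" using lam(3)[of x] Vnn[of "T x"] hv
      by (cases "V (T x)") auto
    have "ereal (w / v) \<in> R" unfolding R_def using w v hv
      by (auto intro!: exI[of _ x])
    hence "ereal (w / v) \<le> ereal n" using ne Ndef by (metis Sup_upper)
    hence "w / v \<le> n" by simp
    hence "w \<le> n * v" using v by (simp add: divide_le_eq mult.commute)
    thus ?thesis using w by simp
  qed
  have iter: "V ((T ^^ k) x) \<le> ereal (n ^ k * vb)" if x: "x \<in> X" for x k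
  proof (induction k)
    case 0
    have "V x \<le> (SUP x\<in>X. V x)" using x by (rule SUP_upper)
    thus ?case using vbe by simp
  next
    case (Suc k)
    obtain w where w: "V ((T ^^ k) x) = ereal w" using Suc Vnn[of "(T ^^ k) x"]
      by (cases "V ((T ^^ k) x)") auto
    have "V ((T ^^ Suc k) x) \<le> ereal (n * w)" using step[OF w] by simp
    also have "\<dots> \<le> ereal (n ^ Suc k * vb)" using Suc w n by (simp add: mult_left_mono)
    finally show ?case .
  qed
  have Psub: "\<phi> ((T ^^ k) x) \<in> P" if "x \<in> X" for x k
    unfolding P_def Iphi_def using that
    by (auto intro!: closure_subset[THEN subsetD] hull_subset[THEN subsetD])
  have certp: "ereal (\<alpha> (\<phi> ((T ^^ k) x))) \<le> V ((T ^^ k) x)" if "x \<in> X" for x k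
    using cert that unfolding certificate_def by blast
  have nuk: "nu X T \<phi> k \<le> h (n ^ k)" for k
  proof -
    have y: "n ^ k \<in> {0..1}" using n by (simp add: power_le_one)
    have "\<phi> ((T ^^ k) x) \<le> h (n ^ k)" if x: "x \<in> X" for x
    proof -
      have "ereal (\<alpha> (\<phi> ((T ^^ k) x))) \<le> ereal (n ^ k * vb)"
        using certp[OF x] iter[OF x] by (rule order_trans)
      hence "\<alpha> (\<phi> ((T ^^ k) x)) \<le> \<alpha> (h (n ^ k))" using key[OF y] by simp
      thus ?thesis using ord2 Psub[OF x] key[OF y] IJ by blast
    qed
    thus ?thesis unfolding nu_def using X_ne by (auto intro: cSUP_least)
  qed
  obtain k where k: "\<alpha> (nu X T \<phi> k) > 0" using cert unfolding certificate_def by blast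
  have nuP: "nu X T \<phi> k \<in> P"
  proof -
    let ?S = "(\<lambda>x. \<phi> ((T ^^ k) x)) ` X"
    have "Sup ?S \<in> closure ?S" using X_ne nu_fin[of k] by (intro closure_contains_Sup) auto
    moreover have "closure ?S \<subseteq> P" using Psub Pcl by (intro closure_minimal) auto
    ultimately show ?thesis unfolding nu_def by auto
  qed
  have h0: "h 0 \<in> I" "\<alpha> (h 0) = 0" using key[of 0] by auto
  have "h 0 < nu X T \<phi> k" using ord[of "h 0" "nu X T \<phi> k"] h0 k nuP IJ by auto
  hence "{k. nu X T \<phi> k > h 0} \<noteq> {}" by blast
  thus ?thesis using hsm hct Npos N1 nuk n_def by simp
qed

end
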